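(* Let $N,K,s$ be integers with $1<K<N$, $s\ge 2$, set $\epsilon=1/N$, let $\phi:(0,\infty)\to\mathbb{R}$ be continuously differentiable, $F>0$, and let $\mathcal{E}^{qnl}$ be the generalized quasi-nonlocal energy defined below. Then the uniform deformation $\mathbf y_F$ has no ghost forces: $\langle\delta\mathcal{E}^{qnl}(\mathbf{y}_F),\mathbf{w}\rangle=0$ for all $\mathbf{w}\in\mathcal{U}$, i.e. all forces $-\partial\mathcal{E}^{qnl}/\partial y_\ell$ vanish at $\mathbf y_F$.
   Context: $\mathcal{U}$ is the space of real sequences $\mathbf u=(u_\ell)_{\ell\in\mathbb{Z}}$ with $u_{\ell+2N}=u_\ell$ and $\sum_{\ell=-N+1}^{N}u_\ell=0$. $(\mathbf y_F)_\ell=F\epsilon\ell$, and admissible deformations are $\mathbf y=\mathbf y_F+\mathbf u$, $\mathbf u\in\mathcal U$. For a sequence $\mathbf v$, $v'_\ell=(v_\ell-v_{\ell-1})/\epsilon$. For $k=2,\dots,s$ let $\mathcal{A}_{qnl}(k)=\{-K-k+1,\dots,K+1\}$ and $\mathcal{C}_{qnl}(k)=\{-N+1,\dots,-K-k\}\cup\{K+2,\dots,N\}$. The generalized QNL energy is $$\mathcal{E}^{qnl}(\mathbf y)=\epsilon\sum_{\ell=-N+1}^{N}\phi(y'_\ell)+\epsilon\sum_{k=2}^{s}\sum_{\ell\in\mathcal{A}_{qnl}(k)}\phi\Big(\sum_{j=0}^{k-1}y'_{\ell+j}\Big)+\epsilon\sum_{k=2}^{s}\sum_{\ell\in\mathcal{C}_{qnl}(k)}\frac1k\sum_{j=0}^{k-1}\phi(k\,y'_{\ell+j}),$$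 and $\langle\delta\mathcal{E}^{qnl}(\mathbf y),\mathbf w\rangle=\frac{d}{dt}\mathcal{E}^{qnl}(\mathbf y+t\mathbf w)|_{t=0}$. *)

theory Defs
  imports Complex_Main
begin

definition eps :: "int \<Rightarrow> real" where
  "eps N = 1 / real_of_int N"

definition Uspace :: "int \<Rightarrow> (int \<Rightarrow> real) set" where
  "Uspace N = {u. (\<forall>l. u (l + 2 * N) = u l) \<and> (\<Sum>l\<in>{-N+1..N}. u l) = 0}"

definition yF :: "int \<Rightarrow> real \<Rightarrow> int \<Rightarrow> real" where
  "yF N F l = F * eps N * real_of_int l"

definition dq :: "int \<Rightarrow> (int \<Rightarrow> real) \<Rightarrow> int \<Rightarrow> real" where
  "dq N v l = (v l - v (l - 1)) / eps N"

definition Aqnl :: "int \<Rightarrow> int \<Rightarrow> int set" where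
  "Aqnl K k = {-K-k+1..K+1}"

definition Cqnl :: "int \<Rightarrow> int \<Rightarrow> int \<Rightarrow> int set" where
  "Cqnl N K k = {-N+1..-K-k} \<union> {K+2..N}"

definition Eqnl :: "int \<Rightarrow> int \<Rightarrow> int \<Rightarrow> (real \<Rightarrow> real) \<Rightarrow> (int \<Rightarrow> real) \<Rightarrow> real" where
  "Eqnl N K s \<phi> y =
     eps N * (\<Sum>l\<in>{-N+1..N}. \<phi> (dq N y l))
   + eps N * (\<Sum>k\<in>{2..s}. \<Sum>l\<in>Aqnl K k. \<phi> (\<Sum>j\<in>{0..k-1}. dq N y (l + j)))
   + eps N * (\<Sum>k\<in>{2..s}. \<Sum>l\<in>Cqnl N K k.
        (1 / real_of_int k) * (\<Sum>j\<in>{0..k-1}. \<phi> (real_of_int k * dq N y (l + j))))"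

end

theory Submission
  imports Defs
begin

lemma telesc:
  fixes g :: "int \<Rightarrow> real"
  assumes "a \<le> b"
  shows "(\<Sum>l\<in>{a+1..b}. g l - g (l - 1)) = g b - g a"
  using assms
proof (induction b rule: int_ge_induct)
  case base then show ?case by simp
next
  case (step i)
  have "{a+1..i+1} = insert (i+1) {a+1..i}" using step by auto
  then show ?case using step by simp
qed

lemma chainphi:
  assumes "\<And>x. x>0 \<Longrightarrow> (\<phi> has_real_derivative \<phi>' x) (at x)" "c > 0"
  shows "((\<lambda>t. \<phi> (c + t * d)) has_real_derivative \<phi>' c * d) (at 0)"
proof -
  have g: "((\<lambda>t::real. c + t * d) has_real_derivative d) (at 0)"
    by (auto intro!: derivative_eq_intros)
  have "(\<phi> has_real_derivative \<phi>' c) (at ((\<lambda>t. c + t * d) 0))" using assms by simp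
  from DERIV_chain2[OF this g] show ?thesis by simp
qed

theorem proposition4p1:
  fixes N K s :: int and \<phi> :: "real \<Rightarrow> real" and F :: real
  assumes "1 < K" and "K < N" and "2 \<le> s"
    and "K + s \<le> N"
    and "\<exists>\<phi>'. continuous_on {0<..} \<phi>' \<and> (\<forall>x>0. (\<phi> has_real_derivative \<phi>' x) (at x))"
    and "0 < F"
  shows "\<forall>w\<in>Uspace N.
           ((\<lambda>t. Eqnl N K s \<phi> (\<lambda>l. yF N F l + t * w l)) has_real_derivative 0) (at 0)"
proof
  fix w assume w: "w \<in> Uspace N"
  obtain \<phi>' where dphi: "\<And>x. x>0 \<Longrightarrow> (\<phi> has_real_derivative \<phi>' x) (at x)" using assms(5) by blast
  have per: "\<And>l. w (l + 2*N) = w l" using w by (simp add: Uspace_def)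
  have epsnz: "eps N \<noteq> 0" using assms by (simp add: eps_def)
  define a where "a l = dq N w l" for l
  define P where "P = {-N+1..N}"
  have dqt: "dq N (\<lambda>l. yF N F l + t * w l) l = F + t * a l" for t l
    using epsnz unfolding dq_def a_def yF_def by (simp add: field_simps)
  have sumk: "(\<Sum>j\<in>{0..k-1}. F + t * a (l+j)) = real_of_int k * F + t * (\<Sum>j\<in>{0..k-1}. a (l+j))"
    if "k \<in> {2..s}" for k l t
    using that by (simp add: sum.distrib sum_distrib_left)
  have Eeq: "(\<lambda>t. Eqnl N K s \<phi> (\<lambda>l. yF N F l + t * w l)) = (\<lambda>t.
      eps N * (\<Sum>l\<in>P. \<phi> (F + t * a l))
    + eps N * (\<Sum>k\<in>{2..s}. \<Sum>l\<in>Aqnl K k. \<phi> (real_of_int k * F + t * (\<Sum>j\<in>{0..k-1}. a (l+j))))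
    + eps N * (\<Sum>k\<in>{2..s}. \<Sum>l\<in>Cqnl N K k.
        (1 / real_of_int k) * (\<Sum>j\<in>{0..k-1}. \<phi> (real_of_int k * F + t * (real_of_int k * a (l + j))))))"
    unfolding Eqnl_def dqt P_def
    by (intro ext arg_cong2[where f="(+)"] arg_cong2[where f="(*)"] refl sum.cong)
       (simp_all add: sumk algebra_simps)
  define D where "D =
      eps N * (\<Sum>l\<in>P. \<phi>' F * a l)
    + eps N * (\<Sum>k\<in>{2..s}. \<Sum>l\<in>Aqnl K k. \<phi>' (real_of_int k * F) * (\<Sum>j\<in>{0..k-1}. a (l+j)))
    + eps N * (\<Sum>k\<in>{2..s}. \<Sum>l\<in>Cqnl N K k.
        (1 / real_of_int k) * (\<Sum>j\<in>{0..k-1}. \<phi>' (real_of_int k * F) * (real_of_int k * a (l + j))))"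
  have kpos: "k \<in> {2..s} \<Longrightarrow> real_of_int k * F > 0" for k using assms(6) by auto
  have deriv: "((\<lambda>t. Eqnl N K s \<phi> (\<lambda>l. yF N F l + t * w l)) has_real_derivative D) (at 0)"
    unfolding Eeq D_def
    by (intro DERIV_add DERIV_cmult DERIV_sum chainphi[OF dphi] kpos assms(6)) auto
  have tel: "(\<Sum>l\<in>P. a (l + j)) = 0" for j
  proof -
    have "(\<Sum>l\<in>P. a (l + j)) = (\<Sum>l\<in>{(-N+j)+1..N+j}. w l - w (l-1)) / eps N"
    proof -
      have "(\<Sum>l\<in>P. a (l + j)) = (\<Sum>l\<in>(\<lambda>l. l + j) ` P. a l)"
        by (subst sum.reindex) (auto simp: inj_on_def)
      also have "(\<lambda>l. l + j) ` P = {(-N+j)+1..N+j}"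
        unfolding P_def by (simp add: algebra_simps)
      finally show ?thesis by (simp add: a_def dq_def sum_divide_distrib)
    qed
    also have "\<dots> = (w (N+j) - w (-N+j)) / eps N"
      using assms by (subst telesc) auto
    also have "w (N+j) = w (-N+j)" using per[of "-N+j"] by (simp add: algebra_simps)
    finally show ?thesis by simp
  qed
  have AC: "Aqnl K k \<union> Cqnl N K k = P" "Aqnl K k \<inter> Cqnl N K k = {}" if "k \<in> {2..s}" for k
    using that assms unfolding Aqnl_def Cqnl_def P_def by auto
  have inner: "(\<Sum>l\<in>Aqnl K k. \<phi>' (real_of_int k * F) * (\<Sum>j\<in>{0..k-1}. a (l+j)))
     + (\<Sum>l\<in>Cqnl N K k. (1 / real_of_int k) * (\<Sum>j\<in>{0..k-1}. \<phi>' (real_of_int k * F) * (real_of_int k * a (l + j)))) = 0"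
    if k: "k \<in> {2..s}" for k
  proof -
    have kne: "real_of_int k \<noteq> 0" using k by auto
    have "(\<Sum>l\<in>Cqnl N K k. (1 / real_of_int k) * (\<Sum>j\<in>{0..k-1}. \<phi>' (real_of_int k * F) * (real_of_int k * a (l + j))))
       = (\<Sum>l\<in>Cqnl N K k. \<phi>' (real_of_int k * F) * (\<Sum>j\<in>{0..k-1}. a (l+j)))"
      using kne by (intro sum.cong refl) (simp add: sum_distrib_left algebra_simps)
    then have "?thesis \<longleftrightarrow> (\<Sum>l\<in>Aqnl K k \<union> Cqnl N K k. \<phi>' (real_of_int k * F) * (\<Sum>j\<in>{0..k-1}. a (l+j))) = 0"
      by (subst sum.union_disjoint) (auto simp: Aqnl_def Cqnl_def AC[OF k])
    also have "\<dots> \<longleftrightarrow> \<phi>' (real_of_int k * F) * (\<Sum>j\<in>{0..k-1}. \<Sum>l\<in>P. a (l+j)) = 0"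
      unfolding AC[OF k] by (simp add: sum_distrib_left[symmetric] sum.swap[of _ P])
    finally show ?thesis using tel by simp
  qed
  have "D = 0"
  proof -
    have "D = eps N * (\<phi>' F * (\<Sum>l\<in>P. a (l + 0)))
      + eps N * (\<Sum>k\<in>{2..s}. (\<Sum>l\<in>Aqnl K k. \<phi>' (real_of_int k * F) * (\<Sum>j\<in>{0..k-1}. a (l+j)))
     + (\<Sum>l\<in>Cqnl N K k. (1 / real_of_int k) * (\<Sum>j\<in>{0..k-1}. \<phi>' (real_of_int k * F) * (real_of_int k * a (l + j)))))"
      unfolding D_def by (simp add: sum.distrib sum_distrib_left algebra_simps)
    also have "\<dots> = 0" using tel[of 0] inner by simp
    finally show ?thesis .
  qed
  with deriv show "((\<lambda>t. Eqnl N K s \<phi> (\<lambda>l. yF N F l + t * w l)) has_real_derivative 0) (at 0)" by simp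
qed

end
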